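(* Let $r\geq 2$ and let $X$ be a rose with $r$ petals, with $F\cong\pi_1(X,x_0)$ the free group on the generators $\alpha_1,\ldots,\alpha_r$ corresponding to the oriented petals. Let $Z$ be a finite, non-empty, connected graph and let $Z\to X$ be an immersion that is not a covering map. Then the immersion factors as $Z\hookrightarrow Y\to X$, where $Z$ is a subgraph of $Y$, $Y$ is a finite connected graph, $Y\to X$ is a finite-sheeted (combinatorial) covering map, and the image of the resulting homomorphism $F\to\mathrm{Sym}(V(Y))$ (given by the action of $F$ on the vertex set $V(Y)$ of $Y$ by path lifting) is exactly the alternating group $\mathrm{Alt}(V(Y))$.
   Context: A rose with $r$ petals is a graph with exactly one vertex $x_0$ and $r$ edges; each edge is oriented and labelled by a generator $\alpha_i$, giving $\pi_1(X,x_0)\cong F$ free on $\alpha_1,\dots,\alpha_r$. A combinatorial map of graphs $Y\to X$ (sending vertices to vertices and edges to edges) is equivalent to an orientation and labelling of the edges of $Y$ by $\alpha_1,\ldots,\alpha_r$. It is an immersion if it is injective on links of vertices, equivalently if at every vertex of $Y$ and for every label $\alpha_i$ there is at most one incoming and at most one outgoing edge labelled $\alpha_i$; it is a covering map if it is bijective on links of vertices, equivalently if at every vertex there is exactly one incoming and exactly one outgoing edge labelled $\alpha_i$ for each $i$. For a covering $Y\to X$, $F$ acts on the vertices of $Y$ by path lifting: for a vertex $y$ and $\gamma\in F$ viewed as a loop at $x_0$, $\gamma.y$ is the endpoint of the unique lift of $\gamma$ starting at $y$; concretely, $\alpha_i$ sends $u$ to $v$ when there is an edge labelled $\alpha_i$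 oriented from $u$ to $v$. *)

theory Defs
  imports "HOL-Combinatorics.Permutations"
begin

text \<open>A graph over the rose with r petals: vertex set V and a set E of labelled
oriented edges (u, i, v), meaning an edge labelled alpha_i oriented from u to v
(labels i < r).  Such a labelling is the same as a combinatorial map to the rose.
Parallel edges with the same label and orientation cannot occur in an immersion,
so for immersions/coverings this representation loses nothing.\<close>

definition labelled_graph :: "nat \<Rightarrow> 'v set \<Rightarrow> ('v \<times> nat \<times> 'v) set \<Rightarrow> bool" where
  "labelled_graph r V E \<longleftrightarrow> (\<forall>(u, i, v) \<in> E. u \<in> V \<and> v \<in> V \<and> i < r)"

definition adj :: "('v \<times> nat \<times> 'v) set \<Rightarrow> ('v \<times> 'v) set" where
  "adj E = {(u, v). \<exists>i. (u, i, v) \<in> E \<or> (v, i, u) \<in> E}"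

definition connected_graph :: "'v set \<Rightarrow> ('v \<times> nat \<times> 'v) set \<Rightarrow> bool" where
  "connected_graph V E \<longleftrightarrow> (\<forall>u \<in> V. \<forall>v \<in> V. (u, v) \<in> (adj E)\<^sup>*)"

definition immersion :: "nat \<Rightarrow> 'v set \<Rightarrow> ('v \<times> nat \<times> 'v) set \<Rightarrow> bool" where
  "immersion r V E \<longleftrightarrow> labelled_graph r V E \<and>
     (\<forall>u \<in> V. \<forall>i < r. (\<forall>v w. (u, i, v) \<in> E \<and> (u, i, w) \<in> E \<longrightarrow> v = w) \<and>
                       (\<forall>v w. (v, i, u) \<in> E \<and> (w, i, u) \<in> E \<longrightarrow> v = w))"

definition covering :: "nat \<Rightarrow> 'v set \<Rightarrow> ('v \<times> nat \<times> 'v) set \<Rightarrow> bool" where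
  "covering r V E \<longleftrightarrow> labelled_graph r V E \<and>
     (\<forall>u \<in> V. \<forall>i < r. (\<exists>!v. (u, i, v) \<in> E) \<and> (\<exists>!v. (v, i, u) \<in> E))"

text \<open>Action of the generator alpha_i (and of its inverse) on vertices by path
lifting; extended by the identity outside V.\<close>
definition gen_act :: "'v set \<Rightarrow> ('v \<times> nat \<times> 'v) set \<Rightarrow> nat \<Rightarrow> 'v \<Rightarrow> 'v" where
  "gen_act V E i u = (if u \<in> V then (THE v. (u, i, v) \<in> E) else u)"

definition gen_act_inv :: "'v set \<Rightarrow> ('v \<times> nat \<times> 'v) set \<Rightarrow> nat \<Rightarrow> 'v \<Rightarrow> 'v" where
  "gen_act_inv V E i u = (if u \<in> V then (THE v. (v, i, u) \<in> E) else u)"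

text \<open>Image of F = <alpha_1..alpha_r> in Sym(V): all permutations induced by
words in the generators and their inverses.\<close>
inductive_set monodromy_group :: "nat \<Rightarrow> 'v set \<Rightarrow> ('v \<times> nat \<times> 'v) set \<Rightarrow> ('v \<Rightarrow> 'v) set"
  for r V E where
  mg_id: "id \<in> monodromy_group r V E"
| mg_gen: "p \<in> monodromy_group r V E \<Longrightarrow> i < r \<Longrightarrow> gen_act V E i \<circ> p \<in> monodromy_group r V E"
| mg_inv: "p \<in> monodromy_group r V E \<Longrightarrow> i < r \<Longrightarrow> gen_act_inv V E i \<circ> p \<in> monodromy_group r V E"

definition alt_group :: "'v set \<Rightarrow> ('v \<Rightarrow> 'v) set" where
  "alt_group V = {p. p permutes V \<and> evenperm p}"

end

theory Submission
  imports Defs "HOL-Combinatorics.Cycles"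
begin

definition cyc3 :: "'b \<Rightarrow> 'b \<Rightarrow> 'b \<Rightarrow> 'b \<Rightarrow> 'b" where
  "cyc3 u v w = transpose u v \<circ> transpose v w"

definition grp :: "('b \<Rightarrow> 'b) set \<Rightarrow> bool" where
  "grp G \<longleftrightarrow> id \<in> G \<and> (\<forall>f\<in>G. \<forall>g\<in>G. f \<circ> g \<in> G) \<and> (\<forall>f\<in>G. inv f \<in> G) \<and> (\<forall>f\<in>G. bij f)"

lemma tau_in:
  assumes G: "grp G" and pq: "p \<noteq> q" and ab: "a \<noteq> b" "a \<in> R" "b \<in> R"
    and rho: "\<And>x. x \<in> R \<Longrightarrow> x \<noteq> p \<Longrightarrow> x \<noteq> q \<Longrightarrow> cyc3 p q x \<in> G"
  shows "transpose p q \<circ> transpose a b \<in> G"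
proof -
  have c: "f \<in> G \<Longrightarrow> g \<in> G \<Longrightarrow> f \<circ> g \<in> G" for f g using G unfolding grp_def by blast
  have i: "id \<in> G" using G unfolding grp_def by blast
  consider "{a,b} = {p,q}" | "a = q" "b \<noteq> p" | "b = q" "a \<noteq> p" | "a = p" "b \<noteq> q" | "b = p" "a \<noteq> q"
    | "a \<notin> {p,q}" "b \<notin> {p,q}" by blast
  then show ?thesis
  proof cases
    case 1
    then have "transpose p q \<circ> transpose a b = id"
      using pq ab by (auto simp: fun_eq_iff transpose_def doubleton_eq_iff)
    then show ?thesis using i by simp
  next
    case 2
    then have "transpose p q \<circ> transpose a b = cyc3 p q b"
      by (simp add: cyc3_def)
    then show ?thesis using rho 2 ab by auto
  next
    case 3
    then have "transpose p q \<circ> transpose a b = cyc3 p q a"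
      by (simp add: cyc3_def transpose_commute)
    then show ?thesis using rho 3 ab by auto
  next
    case 4
    then have "transpose p q \<circ> transpose a b = cyc3 p q b \<circ> cyc3 p q b"
      using pq ab by (simp add: cyc3_def fun_eq_iff transpose_def)
    then show ?thesis using rho 4 ab c by auto
  next
    case 5
    then have "transpose p q \<circ> transpose a b = cyc3 p q a \<circ> cyc3 p q a"
      using pq ab by (simp add: cyc3_def fun_eq_iff transpose_def)
    then show ?thesis using rho 5 ab c by auto
  next
    case 6
    then have "transpose p q \<circ> transpose a b = cyc3 p q a \<circ> cyc3 p q b \<circ> cyc3 p q b \<circ> cyc3 p q a"
      using pq ab by (intro ext) (auto simp: cyc3_def transpose_def)
    then show ?thesis using rho 6 ab c by auto
  qed
qed

lemma alt_sub:
  assumes G: "grp G" and R: "finite R" and pq: "p \<noteq> q" "p \<in> R" "q \<in> R"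
    and rho: "\<And>x. x \<in> R \<Longrightarrow> x \<noteq> p \<Longrightarrow> x \<noteq> q \<Longrightarrow> cyc3 p q x \<in> G"
    and g: "g permutes R" "evenperm g"
  shows "g \<in> G"
proof -
  have c: "f \<in> G \<Longrightarrow> h \<in> G \<Longrightarrow> f \<circ> h \<in> G" for f h using G unfolding grp_def by blast
  have iv: "f \<in> G \<Longrightarrow> inv f \<in> G" for f using G unfolding grp_def by blast
  have i: "id \<in> G" using G unfolding grp_def by blast
  have tau: "transpose p q \<circ> transpose a b \<in> G" if "a \<noteq> b" "a \<in> R" "b \<in> R" for a b
    using tau_in[OF G pq(1) that rho] by blast
  have tau': "transpose a b \<circ> transpose p q \<in> G" if "a \<noteq> b" "a \<in> R" "b \<in> R" for a b
  proof -
    have "inv (transpose p q \<circ> transpose a b) = transpose a b \<circ> transpose p q"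
      by (rule inv_unique_comp) (simp_all add: fun_eq_iff)
    then show ?thesis using iv[OF tau[OF that]] by simp
  qed
  have "(evenperm g \<longrightarrow> g \<in> G) \<and> (\<not> evenperm g \<longrightarrow> transpose p q \<circ> g \<in> G)"
    using g(1) R
  proof (induction g rule: permutes_induct)
    case id
    have "evenperm (id::'a\<Rightarrow>'a)" by simp
    then show ?case using i by blast
  next
    case (swap a b h)
    have ph: "permutation h" unfolding permutation_permutes by (rule exI[of _ R]) (simp add: R \<open>h permutes R\<close>)
    show ?case
    proof (cases "a = b")
      case True
      then show ?thesis using swap.IH by simp
    next
      case False
      have ev: "evenperm (transpose a b \<circ> h) = (\<not> evenperm h)"
        using evenperm_comp[OF permutation_swap_id ph, of a b] evenperm_swap[of a b] False by simp
      show ?thesis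
      proof (cases "evenperm h")
        case True
        then have "h \<in> G" using swap.IH by blast
        then have "(transpose p q \<circ> transpose a b) \<circ> h \<in> G" using c[OF tau[OF False swap.hyps(1,2)]] by blast
        moreover have "\<not> evenperm (transpose a b \<circ> h)" using ev True by simp
        ultimately show ?thesis by (simp only: o_assoc simp_thms)
      next
        case fls: False
        then have "transpose p q \<circ> h \<in> G" using swap.IH by blast
        then have "(transpose a b \<circ> transpose p q) \<circ> (transpose p q \<circ> h) \<in> G"
          using c[OF tau'[OF False swap.hyps(1,2)]] by blast
        moreover have "(transpose a b \<circ> transpose p q) \<circ> (transpose p q \<circ> h) = transpose a b \<circ> h"
          by (simp add: fun_eq_iff)
        ultimately show ?thesis using ev fls by (simp add: comp_def)
      qed
    qed
  qed
  then show ?thesis using g by simp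
qed

definition altin :: "('b \<Rightarrow> 'b) set \<Rightarrow> 'b set \<Rightarrow> bool" where
  "altin G R \<longleftrightarrow> (\<forall>g. g permutes R \<and> evenperm g \<longrightarrow> g \<in> G)"

lemma cyc3_permutes: "u \<in> R \<Longrightarrow> v \<in> R \<Longrightarrow> w \<in> R \<Longrightarrow> cyc3 u v w permutes R"
  unfolding cyc3_def by (intro permutes_compose permutes_swap_id)

lemma cyc3_even: "u \<noteq> v \<Longrightarrow> v \<noteq> w \<Longrightarrow> evenperm (cyc3 u v w)"
  unfolding cyc3_def by (simp add: evenperm_comp permutation_swap_id evenperm_swap)

lemma cyc3_list: "cyc3 u v w = cycle_of_list [u, v, w]"
  by (simp add: cyc3_def)

lemma cyc3_conj:
  assumes "bij s" "distinct [u, v, w]"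
  shows "s \<circ> cyc3 u v w \<circ> inv s = cyc3 (s u) (s v) (s w)"
  using conjugation_of_cycle[OF assms(2) assms(1)] by (simp add: cyc3_list)

lemma grp_comp: "grp G \<Longrightarrow> f \<in> G \<Longrightarrow> g \<in> G \<Longrightarrow> f \<circ> g \<in> G"
  unfolding grp_def by blast
lemma grp_inv: "grp G \<Longrightarrow> f \<in> G \<Longrightarrow> inv f \<in> G"
  unfolding grp_def by blast
lemma grp_bij: "grp G \<Longrightarrow> f \<in> G \<Longrightarrow> bij f"
  unfolding grp_def by blast

lemma grow:
  assumes G: "grp G" and R: "finite R" and alt: "altin G R" and uv: "u \<noteq> v" "u \<in> R" "v \<in> R"
    and y: "y \<notin> R" and c: "cyc3 u v y \<in> G"
  shows "altin G (insert y R)"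
  unfolding altin_def
proof (intro allI impI)
  fix g assume g: "g permutes insert y R \<and> evenperm g"
  show "g \<in> G"
  proof (rule alt_sub[OF G _ uv(1) _ _ _ conjunct1[OF g] conjunct2[OF g]])
    show "finite (insert y R)" using R by simp
    show "u \<in> insert y R" "v \<in> insert y R" using uv by auto
    fix x assume x: "x \<in> insert y R" "x \<noteq> u" "x \<noteq> v"
    show "cyc3 u v x \<in> G"
    proof (cases "x = y")
      case True then show ?thesis using c by simp
    next
      case False
      then have "x \<in> R" using x by simp
      then show ?thesis using alt uv x cyc3_permutes[of u R v x] cyc3_even[of u v x]
        unfolding altin_def by blast
    qed
  qed
qed

lemma closure_step:
  assumes G: "grp G" and R: "finite R" and alt: "altin G R"
    and maxi: "\<And>y. y \<in> V \<Longrightarrow> y \<notin> R \<Longrightarrow> \<not> altin G (insert y R)"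
    and s: "s \<in> G" "s permutes V"
    and uv: "u \<noteq> v" "u \<in> R" "v \<in> R" "s u \<in> R" "s v \<in> R"
    and x: "x \<in> R" and RV: "R \<subseteq> V"
  shows "s x \<in> R"
proof (rule ccontr)
  assume nx: "s x \<notin> R"
  then have xuv: "x \<noteq> u" "x \<noteq> v" using uv by auto
  have "cyc3 u v x \<in> G" using alt uv x xuv cyc3_permutes[of u R v x] cyc3_even[of u v x]
    unfolding altin_def by blast
  then have "s \<circ> cyc3 u v x \<circ> inv s \<in> G"
    using G s grp_comp grp_inv by metis
  moreover have "s \<circ> cyc3 u v x \<circ> inv s = cyc3 (s u) (s v) (s x)"
    using cyc3_conj[of s u v x] permutes_bij[OF s(2)] uv xuv by simp
  ultimately have c: "cyc3 (s u) (s v) (s x) \<in> G" by simp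
  have "s u \<noteq> s v" using permutes_inj[OF s(2)] uv by (auto dest: injD)
  then have "altin G (insert (s x) R)"
    using grow[OF G R alt _ uv(4,5) nx c] by simp
  moreover have "s x \<in> V" using permutes_in_image[OF s(2)] x RV by auto
  ultimately show False using maxi nx by blast
qed

lemma commutator3:
  assumes bx: "bij x" and by': "bij y"
    and sup: "{w. x w \<noteq> w} \<inter> {w. y w \<noteq> w} = {c}"
  shows "x \<circ> y \<circ> inv x \<circ> inv y = cyc3 c (x c) (y c)"
proof -
  have xc: "x c \<noteq> c" and yc: "y c \<noteq> c" using sup by auto
  have excl: "w \<noteq> c \<Longrightarrow> x w \<noteq> w \<Longrightarrow> y w = w" for w using sup by blast
  have ix: "x (inv x w) = w" for w using bx by (simp add: bij_is_surj surj_f_inv_f)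
  have iy: "y (inv y w) = w" for w using by' by (simp add: bij_is_surj surj_f_inv_f)
  have xi: "inv x (x w) = w" for w using bx by (simp add: bij_is_inj)
  have yi: "inv y (y w) = w" for w using by' by (simp add: bij_is_inj)
  have xinj: "x a = x b \<longleftrightarrow> a = b" for a b using bx by (auto dest: bij_is_inj injD)
  have yinj: "y a = y b \<longleftrightarrow> a = b" for a b using by' by (auto dest: bij_is_inj injD)
  have ixfix: "x w = w \<Longrightarrow> inv x w = w" for w by (metis xi)
  have iyfix: "y w = w \<Longrightarrow> inv y w = w" for w by (metis yi)
  have d1: "x c \<noteq> y c"
  proof
    assume "x c = y c"
    then have "y (x c) \<noteq> x c \<or> x (x c) \<noteq> x c" using xinj yinj xc by metis
    moreover have "x (x c) \<noteq> x c" using xinj xc by metis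
    moreover have "x c \<noteq> c" by (rule xc)
    ultimately show False using excl[of "x c"] \<open>x c = y c\<close> yinj yc by metis
  qed
  show ?thesis
  proof (rule ext)
    fix w
    show "(x \<circ> y \<circ> inv x \<circ> inv y) w = cyc3 c (x c) (y c) w"
    proof -
      consider "w = c" | "w = x c" | "w = y c" | "w \<noteq> c" "w \<noteq> x c" "w \<noteq> y c" by blast
      then show ?thesis
      proof cases
        case 1
        define c1 where "c1 = inv y c"
        have "y c1 = c" using iy c1_def by simp
        then have "c1 \<noteq> c" using yc by auto
        have "y c1 \<noteq> c1" using \<open>y c1 = c\<close> \<open>c1 \<noteq> c\<close> by simp
        then have "x c1 = c1" using excl[of c1] \<open>c1 \<noteq> c\<close> by blast
        then have "inv x c1 = c1" by (rule ixfix)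
        then show ?thesis using 1 \<open>y c1 = c\<close> d1 xc yc
          by (simp add: c1_def[symmetric] cyc3_def)
      next
        case 2
        have "y (x c) = x c"
          using excl[of "x c"] xc xinj by metis
        then have "inv y (x c) = x c" by (rule iyfix)
        have "x (y c) = y c"
        proof -
          have "y (y c) \<noteq> y c" using yinj yc by metis
          then show ?thesis using excl[of "y c"] yc by metis
        qed
        then show ?thesis using 2 \<open>inv y (x c) = x c\<close> xi d1 xc yc
          by (simp add: cyc3_def)
      next
        case 3
        define c2 where "c2 = inv x c"
        have "x c2 = c" using ix c2_def by simp
        then have "c2 \<noteq> c" using xc by auto
        have "x c2 \<noteq> c2" using \<open>x c2 = c\<close> \<open>c2 \<noteq> c\<close> by simp
        then have "y c2 = c2" using excl[of c2] \<open>c2 \<noteq> c\<close> by blast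
        then show ?thesis using 3 \<open>x c2 = c\<close> yi d1 xc yc
          by (simp add: c2_def[symmetric] cyc3_def)
      next
        case 4
        have rhs: "cyc3 c (x c) (y c) w = w" using 4 by (simp add: cyc3_def)
        show ?thesis
        proof (cases "y w = w")
          case False
          define w1 where "w1 = inv y w"
          have "y w1 = w" using iy w1_def by simp
          have "w1 \<noteq> c" using \<open>y w1 = w\<close> 4 by auto
          have "y w1 \<noteq> w1" using \<open>y w1 = w\<close> False by auto
          then have "x w1 = w1" using excl[of w1] \<open>w1 \<noteq> c\<close> by blast
          then have "inv x w1 = w1" by (rule ixfix)
          have "x w = w" using excl[of w] False 4 by blast
          then show ?thesis using rhs \<open>inv x w1 = w1\<close> \<open>y w1 = w\<close>
            by (simp add: w1_def[symmetric])
        next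
          case True
          then have iyw: "inv y w = w" by (rule iyfix)
          show ?thesis
          proof (cases "x w = w")
            case True
            then show ?thesis using iyw \<open>y w = w\<close> ixfix rhs by simp
          next
            case False
            define w2 where "w2 = inv x w"
            have "x w2 = w" using ix w2_def by simp
            have "w2 \<noteq> c" using \<open>x w2 = w\<close> 4 by auto
            have "x w2 \<noteq> w2" using \<open>x w2 = w\<close> False by auto
            then have "y w2 = w2" using excl[of w2] \<open>w2 \<noteq> c\<close> by blast
            then show ?thesis using rhs iyw \<open>x w2 = w\<close> by (simp add: w2_def[symmetric])
          qed
        qed
      qed
    qed
  qed
qed

lemma extend_perm:
  assumes S: "finite S" and D: "D \<subseteq> S" and f: "inj_on f D" "f ` D \<subseteq> S"
  shows "\<exists>\<tau>. \<tau> permutes S \<and> (\<forall>x\<in>D. \<tau> x = f x)"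
proof -
  have "card (S - D) = card (S - f ` D)"
    using S D f by (simp add: card_Diff_subset finite_subset card_image)
  then obtain g where g: "bij_betw g (S - D) (S - f ` D)"
    using finite_same_card_bij S by (meson finite_Diff)
  define \<tau> where "\<tau> x = (if x \<in> D then f x else if x \<in> S then g x else x)" for x
  have b1: "bij_betw \<tau> D (f ` D)"
    using f(1) by (simp add: bij_betw_def inj_on_def \<tau>_def image_def)
  have b2: "bij_betw \<tau> (S - D) (S - f ` D)"
    using g by (rule bij_betw_cong[THEN iffD1, rotated]) (simp add: \<tau>_def)
  have "bij_betw \<tau> (D \<union> (S - D)) (f ` D \<union> (S - f ` D))"
    by (rule bij_betw_combine[OF b1 b2]) auto
  moreover have "D \<union> (S - D) = S" "f ` D \<union> (S - f ` D) = S" using D f by auto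
  ultimately have "bij_betw \<tau> S S" by simp
  then have "\<tau> permutes S" by (rule bij_imp_permutes) (use D in \<open>auto simp: \<tau>_def\<close>)
  then show ?thesis by (auto simp: \<tau>_def)
qed

lemma pow_split:
  assumes a: "\<rho> permutes A" and b: "\<chi> permutes B" and c: "f permutes C"
    and d: "A \<inter> B = {}" "A \<inter> C = {}" "B \<inter> C = {}"
  shows "(\<rho> \<circ> \<chi> \<circ> f) ^^ n = \<rho> ^^ n \<circ> \<chi> ^^ n \<circ> f ^^ n"
proof (induction n)
  case 0 then show ?case by simp
next
  case (Suc n)
  have an: "(\<rho> ^^ n) permutes A" and bn: "(\<chi> ^^ n) permutes B" and cn: "(f ^^ n) permutes C"
    using permutes_funpow a b c by blast+
  show ?case
  proof (rule ext)
    fix w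
    have "((\<rho> \<circ> \<chi> \<circ> f) ^^ Suc n) w = (\<rho> \<circ> \<chi> \<circ> f) ((\<rho> ^^ n \<circ> \<chi> ^^ n \<circ> f ^^ n) w)"
      by (simp only: funpow.simps(2) Suc.IH comp_apply)
    also have "\<dots> = (\<rho> ^^ Suc n \<circ> \<chi> ^^ Suc n \<circ> f ^^ Suc n) w"
    proof (cases "w \<in> A")
      case True
      then have "w \<notin> B" "w \<notin> C" "(\<rho> ^^ n) w \<in> A" "\<rho> w \<in> A"
        using d permutes_in_image[OF an] permutes_in_image[OF a] by auto
      then have "(\<rho> ^^ n) w \<notin> B" "(\<rho> ^^ n) w \<notin> C" "\<rho> w \<notin> B" "\<rho> w \<notin> C" using d by auto
      then show ?thesis
        using \<open>w \<notin> B\<close> \<open>w \<notin> C\<close> permutes_not_in[OF bn] permutes_not_in[OF cn]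
          permutes_not_in[OF b] permutes_not_in[OF c]
        by (simp add: funpow_swap1)
    next
      case nA: False
      show ?thesis
      proof (cases "w \<in> B")
        case True
        then have "w \<notin> C" "(\<chi> ^^ n) w \<in> B" "\<chi> w \<in> B"
          using d permutes_in_image[OF bn] permutes_in_image[OF b] by auto
        moreover have "(\<chi> ^^ n) (\<chi> w) \<in> B"
          using permutes_in_image[OF bn] \<open>\<chi> w \<in> B\<close> by auto
        ultimately have "(\<chi> ^^ n) w \<notin> A" "(\<chi> ^^ n) w \<notin> C" "\<chi> w \<notin> A" "(\<chi> ^^ n) (\<chi> w) \<notin> A" using d by auto
        then show ?thesis
          using nA \<open>w \<notin> C\<close> permutes_not_in[OF an] permutes_not_in[OF cn]
            permutes_not_in[OF a] permutes_not_in[OF c]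
          by (simp add: funpow_swap1)
      next
        case nB: False
        show ?thesis
        proof (cases "w \<in> C")
          case True
          then have "(f ^^ n) w \<in> C" "f w \<in> C"
            using permutes_in_image[OF cn] permutes_in_image[OF c] by auto
          moreover have "(f ^^ n) (f w) \<in> C"
            using permutes_in_image[OF cn] \<open>f w \<in> C\<close> by auto
          ultimately have "(f ^^ n) w \<notin> A" "(f ^^ n) w \<notin> B" "f w \<notin> A" "f w \<notin> B"
            "(f ^^ n) (f w) \<notin> A" "(f ^^ n) (f w) \<notin> B" using d by auto
          then show ?thesis
            using nA nB permutes_not_in[OF an] permutes_not_in[OF bn]
              permutes_not_in[OF a] permutes_not_in[OF b]
            by (simp add: funpow_swap1)
        next
          case False
          then show ?thesis
            using nA nB permutes_not_in[OF an] permutes_not_in[OF bn] permutes_not_in[OF cn]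
              permutes_not_in[OF a] permutes_not_in[OF b] permutes_not_in[OF c]
            by simp
        qed
      qed
    qed
    finally show "((\<rho> \<circ> \<chi> \<circ> f) ^^ Suc n) w = (\<rho> ^^ Suc n \<circ> \<chi> ^^ Suc n \<circ> f ^^ Suc n) w" .
  qed
qed

definition sh :: "nat \<Rightarrow> nat \<Rightarrow> nat \<Rightarrow> 'a + nat \<Rightarrow> 'a + nat" where
  "sh L P m w = (case w of Inl z \<Rightarrow> Inl z
     | Inr k \<Rightarrow> if L \<le> k \<and> k < L + P then Inr (L + (k - L + m) mod P) else Inr k)"

lemma sh_Inl[simp]: "sh L P m (Inl z) = Inl z"
  by (simp add: sh_def)

lemma sh_in: "L \<le> k \<Longrightarrow> k < L + P \<Longrightarrow> sh L P m (Inr k) = Inr (L + (k - L + m) mod P)"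
  unfolding sh_def by simp

lemma sh_out: "\<not> (L \<le> k \<and> k < L + P) \<Longrightarrow> sh L P m (Inr k) = Inr k"
  unfolding sh_def by (simp only: sum.case if_False)

lemma sh_comp:
  assumes "P > 0" shows "sh L P m \<circ> sh L P m' = sh L P (m + m')"
proof (rule ext)
  fix w :: "'a + nat"
  show "(sh L P m \<circ> sh L P m') w = sh L P (m + m') w"
  proof (cases w)
    case (Inl z) then show ?thesis by simp
  next
    case (Inr k)
    show ?thesis
    proof (cases "L \<le> k \<and> k < L + P")
      case True
      have "(k - L + m') mod P < P" using assms by simp
      then have "sh L P m (sh L P m' (Inr k)) = Inr (L + ((k - L + m') mod P + m) mod P)"
        using True by (simp add: sh_in)
      also have "((k - L + m') mod P + m) mod P = (k - L + m' + m) mod P"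
        by (rule mod_add_left_eq)
      also have "k - L + m' + m = k - L + (m + m')" by simp
      finally show ?thesis using True Inr by (simp add: sh_in)
    next
      case False
      then show ?thesis using Inr by (simp add: sh_out)
    qed
  qed
qed

lemma sh_mod: "sh L P (m mod P) = sh L P m"
proof (rule ext)
  fix w :: "'a + nat"
  show "sh L P (m mod P) w = sh L P m w"
  proof (cases w)
    case (Inl z) then show ?thesis by simp
  next
    case (Inr k)
    show ?thesis
    proof (cases "L \<le> k \<and> k < L + P")
      case True
      have "(k - L + m mod P) mod P = (k - L + m) mod P" by (rule mod_add_right_eq)
      then show ?thesis using True Inr by (simp only: sh_in)
    next
      case False
      then show ?thesis using Inr by (simp add: sh_out)
    qed
  qed
qed

lemma sh_0: "sh L P 0 = id"
proof (rule ext)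
  fix w :: "'a + nat"
  show "sh L P 0 w = id w"
    by (cases w) (auto simp add: sh_def)
qed

lemma sh_pow:
  assumes "P > 0" shows "sh L P m ^^ n = sh L P (m * n)"
proof (induction n)
  case 0 then show ?case by (simp add: sh_0)
next
  case (Suc n)
  show ?case
    by (simp only: funpow.simps(2) Suc.IH sh_comp[OF assms]) (simp add: algebra_simps)
qed

lemma sh_permutes:
  assumes "P > 0" shows "sh L P m permutes (Inr ` {L..<L+P})"
proof -
  have 1: "sh L P m \<circ> sh L P (m * (P - 1)) = id"
  proof -
    have "sh L P m \<circ> sh L P (m * (P - 1)) = sh L P (m + m * (P - 1))" by (rule sh_comp[OF assms])
    also have "m + m * (P - 1) = m * P" using assms by (cases P) (auto simp: algebra_simps)
    also have "sh L P (m * P) = sh L P ((m * P) mod P)" by (rule sh_mod[symmetric])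
    also have "\<dots> = id" by (simp add: sh_0)
    finally show ?thesis .
  qed
  have 2: "sh L P (m * (P - 1)) \<circ> sh L P m = id"
  proof -
    have "sh L P (m * (P - 1)) \<circ> sh L P m = sh L P (m * (P - 1) + m)" by (rule sh_comp[OF assms])
    also have "\<dots> = sh L P (m + m * (P - 1))" by (simp add: add.commute)
    also have "\<dots> = sh L P m \<circ> sh L P (m * (P - 1))" by (rule sh_comp[OF assms, symmetric])
    finally show ?thesis using 1 by (rule trans)
  qed
  have b: "bij (sh L P m)" using o_bij[OF 2 1] .
  show ?thesis unfolding permutes_def
  proof (intro conjI allI impI)
    fix x assume "x \<notin> Inr ` {L..<L+P}"
    then show "sh L P m x = x" by (cases x) (auto simp: sh_def)
  next
    fix y show "\<exists>!x. sh L P m x = y" using b by (metis bij_pointE)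
  qed
qed

lemma sh_moved:
  assumes "P \<ge> 2" shows "{w. sh L P 1 w \<noteq> w} = Inr ` {L..<L+P}"
proof (intro set_eqI iffI)
  fix w assume "w \<in> {w. sh L P 1 w \<noteq> w}"
  then show "w \<in> Inr ` {L..<L+P}"
    by (cases w) (auto simp: sh_def split: if_splits)
next
  fix w assume "w \<in> Inr ` {L..<L+P}"
  then obtain k where k: "w = Inr k" "L \<le> k" "k < L + P" by auto
  have "(k - L + 1) mod P \<noteq> k - L"
  proof (cases "k - L + 1 < P")
    case True then show ?thesis by simp
  next
    case False
    then have "k - L + 1 = P" using k by linarith
    then show ?thesis using assms by simp
  qed
  then show "w \<in> {w. sh L P 1 w \<noteq> w}" using k by (simp add: sh_in)
qed

definition edges_of :: "nat \<Rightarrow> 'b set \<Rightarrow> (nat \<Rightarrow> 'b \<Rightarrow> 'b) \<Rightarrow> ('b \<times> nat \<times> 'b) set" where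
  "edges_of r V \<pi> = {(u, i, \<pi> i u) | u i. u \<in> V \<and> i < r}"

context
  fixes r :: nat and V :: "'b set" and \<pi> :: "nat \<Rightarrow> 'b \<Rightarrow> 'b"
  assumes perm: "\<And>i. i < r \<Longrightarrow> \<pi> i permutes V"
begin

lemma eo_mem: "(u, i, v) \<in> edges_of r V \<pi> \<longleftrightarrow> u \<in> V \<and> i < r \<and> v = \<pi> i u"
  unfolding edges_of_def by auto

lemma eo_gen: "i < r \<Longrightarrow> gen_act V (edges_of r V \<pi>) i = \<pi> i"
proof (rule ext)
  fix w assume i: "i < r"
  show "gen_act V (edges_of r V \<pi>) i w = \<pi> i w"
  proof (cases "w \<in> V")
    case True then show ?thesis unfolding gen_act_def using i by (simp add: eo_mem)
  next
    case False then show ?thesis unfolding gen_act_def using permutes_not_in[OF perm[OF i]] by simp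
  qed
qed

lemma eo_gen_inv: "i < r \<Longrightarrow> gen_act_inv V (edges_of r V \<pi>) i = inv (\<pi> i)"
proof (rule ext)
  fix w assume i: "i < r"
  note p = perm[OF i]
  show "gen_act_inv V (edges_of r V \<pi>) i w = inv (\<pi> i) w"
  proof (cases "w \<in> V")
    case True
    have "(THE v. (v, i, w) \<in> edges_of r V \<pi>) = inv (\<pi> i) w"
    proof (rule the_equality)
      show "(inv (\<pi> i) w, i, w) \<in> edges_of r V \<pi>"
        using True i p by (simp add: eo_mem permutes_inverses permutes_in_image[OF permutes_inv[OF p]])
    next
      fix v assume "(v, i, w) \<in> edges_of r V \<pi>"
      then show "v = inv (\<pi> i) w" using p by (auto simp: eo_mem permutes_inverses)
    qed
    then show ?thesis unfolding gen_act_inv_def using True by simp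
  next
    case False then show ?thesis unfolding gen_act_inv_def
      using permutes_not_in[OF permutes_inv[OF p]] by simp
  qed
qed

lemma eo_covering: "covering r V (edges_of r V \<pi>)"
  unfolding covering_def labelled_graph_def
proof (intro conjI ballI allI impI)
  fix e assume "e \<in> edges_of r V \<pi>"
  then show "case e of (u, i, v) \<Rightarrow> u \<in> V \<and> v \<in> V \<and> i < r"
    using perm by (auto simp: edges_of_def permutes_in_image)
next
  fix u i assume u: "u \<in> V" and i: "i < r"
  note p = perm[OF i]
  show "\<exists>!v. (u, i, v) \<in> edges_of r V \<pi>" using u i by (simp add: eo_mem)
  show "\<exists>!v. (v, i, u) \<in> edges_of r V \<pi>"
  proof (rule ex1I[of _ "inv (\<pi> i) u"])
    show "(inv (\<pi> i) u, i, u) \<in> edges_of r V \<pi>"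
      using u i p by (simp add: eo_mem permutes_inverses permutes_in_image[OF permutes_inv[OF p]])
  next
    fix v assume "(v, i, u) \<in> edges_of r V \<pi>"
    then show "v = inv (\<pi> i) u" using p by (auto simp: eo_mem permutes_inverses)
  qed
qed

lemma eo_adj: "(w, w') \<in> adj (edges_of r V \<pi>) \<Longrightarrow>
   \<exists>i<r. w \<in> V \<and> (w' = \<pi> i w \<or> w' = inv (\<pi> i) w)"
  unfolding adj_def using perm by (auto simp: eo_mem permutes_inverses[OF perm] permutes_in_image[OF perm])

lemma eo_adj_intro: "w \<in> V \<Longrightarrow> i < r \<Longrightarrow> (w, \<pi> i w) \<in> adj (edges_of r V \<pi>)"
  "w \<in> V \<Longrightarrow> i < r \<Longrightarrow> (\<pi> i w, w) \<in> adj (edges_of r V \<pi>)"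
  unfolding adj_def by (auto simp: eo_mem)

abbreviation "MG \<equiv> monodromy_group r V (edges_of r V \<pi>)"

lemma mg_perm: "p \<in> MG \<Longrightarrow> p permutes V"
proof (induction rule: monodromy_group.induct)
  case mg_id then show ?case by (rule permutes_id)
next
  case (mg_gen p i) then show ?case using eo_gen perm permutes_compose by metis
next
  case (mg_inv p i) then show ?case using eo_gen_inv perm permutes_compose permutes_inv by metis
qed

lemma mg_comp: "p \<in> MG \<Longrightarrow> q \<in> MG \<Longrightarrow> p \<circ> q \<in> MG"
proof (induction rule: monodromy_group.induct)
  case mg_id then show ?case by simp
next
  case (mg_gen p i)
  then have "gen_act V (edges_of r V \<pi>) i \<circ> (p \<circ> q) \<in> MG" by (intro monodromy_group.mg_gen)
  then show ?case by (simp only: o_assoc)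
next
  case (mg_inv p i)
  then have "gen_act_inv V (edges_of r V \<pi>) i \<circ> (p \<circ> q) \<in> MG" by (intro monodromy_group.mg_inv)
  then show ?case by (simp only: o_assoc)
qed

lemma mg_pi: "i < r \<Longrightarrow> \<pi> i \<in> MG"
  using monodromy_group.mg_gen[OF monodromy_group.mg_id, of i r V "edges_of r V \<pi>"] eo_gen[of i]
  by (simp only: comp_id)

lemma mg_pi_inv: "i < r \<Longrightarrow> inv (\<pi> i) \<in> MG"
  using monodromy_group.mg_inv[OF monodromy_group.mg_id, of i r V "edges_of r V \<pi>"] eo_gen_inv[of i]
  by (simp only: comp_id)

lemma mg_invc: "p \<in> MG \<Longrightarrow> inv p \<in> MG"
proof (induction rule: monodromy_group.induct)
  case mg_id then show ?case using monodromy_group.mg_id inv_id by metis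
next
  case (mg_gen p i)
  have "inv (\<pi> i \<circ> p) = inv p \<circ> inv (\<pi> i)"
    using o_inv_distrib permutes_bij perm mg_gen mg_perm by metis
  then show ?case using mg_comp mg_gen mg_pi_inv eo_gen by metis
next
  case (mg_inv p i)
  have "inv (inv (\<pi> i) \<circ> p) = inv p \<circ> \<pi> i"
    using o_inv_distrib permutes_bij perm mg_inv mg_perm permutes_inv inv_inv_eq by metis
  then show ?case using mg_comp mg_inv mg_pi eo_gen_inv by metis
qed

lemma mg_grp: "grp MG"
  unfolding grp_def using monodromy_group.mg_id mg_comp mg_invc mg_perm permutes_bij by blast

lemma mg_pow: "p \<in> MG \<Longrightarrow> p ^^ n \<in> MG"
  by (induction n) (simp_all add: monodromy_group.mg_id mg_comp)

lemma mg_even: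
  assumes fin: "finite V" and ev: "\<And>i. i < r \<Longrightarrow> evenperm (\<pi> i)"
  shows "p \<in> MG \<Longrightarrow> evenperm p"
proof (induction rule: monodromy_group.induct)
  case mg_id then show ?case by simp
next
  case (mg_gen p i)
  have "permutation p" "permutation (\<pi> i)"
    using mg_gen mg_perm perm fin permutation_permutes by blast+
  then have "evenperm (\<pi> i \<circ> p)" using evenperm_comp ev mg_gen by metis
  then show ?case using eo_gen mg_gen by metis
next
  case (mg_inv p i)
  have "permutation p" "permutation (\<pi> i)"
    using mg_inv mg_perm perm fin permutation_permutes by blast+
  then have "evenperm (inv (\<pi> i) \<circ> p)"
    using evenperm_comp evenperm_inv permutation_inverse ev mg_inv by metis
  then show ?case using eo_gen_inv mg_inv by metis
qed

end

lemma comp3_regions: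
  assumes a: "\<rho> permutes A" and b: "\<chi> permutes B" and c: "f permutes C"
    and d: "A \<inter> B = {}" "A \<inter> C = {}" "B \<inter> C = {}"
  shows "w \<in> A \<Longrightarrow> (\<rho> \<circ> \<chi> \<circ> f) w = \<rho> w"
    and "w \<in> B \<Longrightarrow> (\<rho> \<circ> \<chi> \<circ> f) w = \<chi> w"
    and "w \<in> C \<Longrightarrow> (\<rho> \<circ> \<chi> \<circ> f) w = f w"
    and "w \<notin> A \<Longrightarrow> w \<notin> B \<Longrightarrow> w \<notin> C \<Longrightarrow> (\<rho> \<circ> \<chi> \<circ> f) w = w"
proof -
  show "w \<in> A \<Longrightarrow> (\<rho> \<circ> \<chi> \<circ> f) w = \<rho> w"
  proof -
    assume w: "w \<in> A"
    then have "w \<notin> B" "w \<notin> C" using d by auto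
    then show ?thesis using permutes_not_in[OF b, of w] permutes_not_in[OF c, of w] by simp
  qed
  show "w \<in> B \<Longrightarrow> (\<rho> \<circ> \<chi> \<circ> f) w = \<chi> w"
  proof -
    assume w: "w \<in> B"
    then have "\<chi> w \<in> B" using permutes_in_image[OF b] by simp
    then have "w \<notin> C" "\<chi> w \<notin> A" using w d by auto
    then show ?thesis using permutes_not_in[OF a, of "\<chi> w"] permutes_not_in[OF c, of w] by simp
  qed
  show "w \<in> C \<Longrightarrow> (\<rho> \<circ> \<chi> \<circ> f) w = f w"
  proof -
    assume w: "w \<in> C"
    then have "f w \<in> C" using permutes_in_image[OF c] by simp
    then have "f w \<notin> A" "f w \<notin> B" using w d by auto
    then show ?thesis using permutes_not_in[OF a, of "f w"] permutes_not_in[OF b, of "f w"] by simp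
  qed
  show "w \<notin> A \<Longrightarrow> w \<notin> B \<Longrightarrow> w \<notin> C \<Longrightarrow> (\<rho> \<circ> \<chi> \<circ> f) w = w"
    using permutes_not_in[OF a] permutes_not_in[OF b] permutes_not_in[OF c] by simp
qed

lemma extend_rel:
  assumes S: "finite S" and Q: "\<And>x y. (x, y) \<in> Q \<Longrightarrow> x \<in> S \<and> y \<in> S"
    and fn: "\<And>x y y'. (x, y) \<in> Q \<Longrightarrow> (x, y') \<in> Q \<Longrightarrow> y = y'"
    and inj: "\<And>x x' y. (x, y) \<in> Q \<Longrightarrow> (x', y) \<in> Q \<Longrightarrow> x = x'"
  shows "\<exists>\<tau>. \<tau> permutes S \<and> (\<forall>x y. (x, y) \<in> Q \<longrightarrow> \<tau> x = y)"
proof -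
  define D where "D = fst ` Q"
  define f where "f x = (THE y. (x, y) \<in> Q)" for x
  have fx: "(x, y) \<in> Q \<Longrightarrow> f x = y" for x y
    unfolding f_def using fn by blast
  have "inj_on f D"
    unfolding inj_on_def D_def using fx inj by force
  moreover have "D \<subseteq> S" "f ` D \<subseteq> S" unfolding D_def using Q fx by force+
  ultimately obtain \<tau> where "\<tau> permutes S" "\<forall>x\<in>D. \<tau> x = f x"
    using extend_perm[OF S] by blast
  then show ?thesis unfolding D_def using fx by force
qed

lemma transpose_pow_even: "(transpose a b) ^^ (2 * k) = id"
  proof -
  have "(transpose a b) ^^ 2 = id" by (simp add: numeral_2_eq_2)
  then show ?thesis by (metis funpow_mult id_funpow)
qed

theorem lemma3p3:
  fixes r :: nat and VZ :: "'a set" and EZ :: "('a \<times> nat \<times> 'a) set"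
  assumes "r \<ge> 2"
    and "finite VZ" and "finite EZ" and "VZ \<noteq> {}"
    and "connected_graph VZ EZ"
    and "immersion r VZ EZ"
    and "\<not> covering r VZ EZ"
  shows "\<exists>(VY :: ('a + nat) set) (EY :: (('a + nat) \<times> nat \<times> ('a + nat)) set).
           finite VY \<and> finite EY \<and> connected_graph VY EY \<and> covering r VY EY \<and>
           Inl ` VZ \<subseteq> VY \<and> (\<lambda>(u, i, v). (Inl u, i, Inl v)) ` EZ \<subseteq> EY \<and>
           monodromy_group r VY EY = alt_group VY"
proof -
  have lab: "\<And>u i v. (u, i, v) \<in> EZ \<Longrightarrow> u \<in> VZ \<and> v \<in> VZ \<and> i < r"
    using assms(6) unfolding immersion_def labelled_graph_def by blast
  have uout: "\<And>u i v w. (u, i, v) \<in> EZ \<Longrightarrow> (u, i, w) \<in> EZ \<Longrightarrow> v = w"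
    using assms(6) lab unfolding immersion_def by blast
  have uin: "\<And>u i v w. (v, i, u) \<in> EZ \<Longrightarrow> (w, i, u) \<in> EZ \<Longrightarrow> v = w"
    using assms(6) lab unfolding immersion_def by blast
  obtain i0 z0 where i0: "i0 < r" and z0: "z0 \<in> VZ"
    and miss: "(\<forall>v. (z0, i0, v) \<notin> EZ) \<or> (\<forall>v. (v, i0, z0) \<notin> EZ)"
  proof -
    have "labelled_graph r VZ EZ" using assms(6) unfolding immersion_def by blast
    then obtain u i where "u \<in> VZ" "i < r" "\<not> (\<exists>!v. (u, i, v) \<in> EZ) \<or> \<not> (\<exists>!v. (v, i, u) \<in> EZ)"
      using assms(7) unfolding covering_def by blast
    moreover have "\<not> (\<exists>!v. (u, i, v) \<in> EZ) \<Longrightarrow> \<forall>v. (u, i, v) \<notin> EZ" using uout by blast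
    moreover have "\<not> (\<exists>!v. (v, i, u) \<in> EZ) \<Longrightarrow> \<forall>v. (v, i, u) \<notin> EZ" using uin by blast
    ultimately show ?thesis using that by blast
  qed
  define j1 where "j1 = (if i0 = 0 then 1 else (0::nat))"
  have j1: "j1 < r" "j1 \<noteq> i0" using assms(1) i0 unfolding j1_def by auto
  define K :: "nat \<Rightarrow> ('a + nat) set" where
    "K i = (if i = i0 then insert (Inr 1) (Inl ` VZ) else Inl ` VZ)" for i
  define Link :: "(('a + nat) \<times> ('a + nat)) set" where
    "Link = (if (\<forall>v. (z0, i0, v) \<notin> EZ) then {(Inl z0, Inr 1)} else {(Inr 1, Inl z0)})"
  define Q :: "nat \<Rightarrow> (('a + nat) \<times> ('a + nat)) set" where
    "Q i = {(Inl u, Inl v) | u v. (u, i, v) \<in> EZ} \<union> (if i = i0 then Link else {})" for i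
  have "\<forall>i. \<exists>\<rho>. i < r \<longrightarrow> \<rho> permutes K i \<and> (\<forall>x y. (x, y) \<in> Q i \<longrightarrow> \<rho> x = y)"
  proof
    fix i
    show "\<exists>\<rho>. i < r \<longrightarrow> \<rho> permutes K i \<and> (\<forall>x y. (x, y) \<in> Q i \<longrightarrow> \<rho> x = y)"
    proof (cases "i < r")
      case False then show ?thesis by blast
    next
      case True
      have "\<exists>\<rho>. \<rho> permutes K i \<and> (\<forall>x y. (x, y) \<in> Q i \<longrightarrow> \<rho> x = y)"
      proof (rule extend_rel)
        show "finite (K i)" using assms(2) unfolding K_def by simp
        show "\<And>x y. (x, y) \<in> Q i \<Longrightarrow> x \<in> K i \<and> y \<in> K i"
          using lab z0 unfolding Q_def K_def Link_def by (auto split: if_splits)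
        show "\<And>x y y'. (x, y) \<in> Q i \<Longrightarrow> (x, y') \<in> Q i \<Longrightarrow> y = y'"
          using uout unfolding Q_def Link_def by (auto split: if_splits)
        show "\<And>x x' y. (x, y) \<in> Q i \<Longrightarrow> (x', y) \<in> Q i \<Longrightarrow> x = x'"
          using uin miss unfolding Q_def Link_def by (auto split: if_splits)
      qed
      then show ?thesis by blast
    qed
  qed
  then obtain \<rho> where \<rho>: "\<And>i. i < r \<Longrightarrow> \<rho> i permutes K i \<and> (\<forall>x y. (x, y) \<in> Q i \<longrightarrow> \<rho> i x = y)"
    by metis
  have \<rho>K: "\<And>i. i < r \<Longrightarrow> \<rho> i permutes K i" using \<rho> by blast
  have \<rho>E: "\<And>u i v. (u, i, v) \<in> EZ \<Longrightarrow> \<rho> i (Inl u) = Inl v"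
    using \<rho> lab unfolding Q_def by blast
  have \<rho>L: "\<rho> i0 (Inl z0) = Inr 1 \<or> \<rho> i0 (Inr 1) = Inl z0"
    using \<rho>[OF i0] unfolding Q_def Link_def by (auto split: if_splits)
  have finK: "\<And>i. finite (K i)" using assms(2) unfolding K_def by simp
  obtain o0 where o0: "\<rho> i0 ^^ o0 = id" "o0 > 0"
    using permutation_is_nilpotent permutation_permutes \<rho>K[OF i0] finK by metis
  obtain o1 where o1: "\<rho> j1 ^^ o1 = id" "o1 > 0"
    using permutation_is_nilpotent permutation_permutes \<rho>K[OF j1(1)] finK by metis
  define N0 where "N0 = 4 * o0 * o1"
  define P where "P = N0 + 1"
  define N where "N = N0 * N0"
  have N0: "N0 \<ge> 4" using o0 o1 unfolding N0_def by simp
  have P5: "P \<ge> 5" using N0 unfolding P_def by simp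
  have NmodP: "N mod P = 1"
  proof -
    obtain m where m: "N0 = Suc m" using N0 by (cases N0) auto
    have "N = 1 + m * P" unfolding N_def P_def m by (simp add: algebra_simps)
    then have "N mod P = 1 mod P" by (simp only: mod_mult_self1)
    then show ?thesis using P5 by simp
  qed
  have \<rho>0N: "\<rho> i0 ^^ N = id"
  proof -
    have "N = o0 * (4 * o1 * N0)" unfolding N_def N0_def by (simp add: algebra_simps)
    then show ?thesis using o0 by (metis funpow_mult id_funpow)
  qed
  have \<rho>1N: "\<rho> j1 ^^ N = id"
  proof -
    have "N = o1 * (4 * o0 * N0)" unfolding N_def N0_def by (simp add: algebra_simps)
    then show ?thesis using o1 by (metis funpow_mult id_funpow)
  qed
  have Neven: "N = 2 * (2 * o0 * o1 * N0)" unfolding N_def N0_def by (simp add: algebra_simps)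

  define cycA :: "'a + nat \<Rightarrow> 'a + nat" where "cycA = sh (P - 1) P 1"
  define cycB :: "'a + nat \<Rightarrow> 'a + nat" where "cycB = sh 0 P 1"
  define CA :: "('a + nat) set" where "CA = Inr ` {P - 1..<P - 1 + P}"
  define CB :: "('a + nat) set" where "CB = Inr ` {0..<0 + P}"
  define \<chi> where "\<chi> i = (if i = i0 then cycA else if i = j1 then cycB else id)" for i
  define C where "C i = (if i = i0 then CA else if i = j1 then CB else {})" for i
  define tr :: "nat \<Rightarrow> 'a + nat \<Rightarrow> 'a + nat" where
    "tr i = (if i = j1 then transpose (Inr (P + 1)) (Inr (P + 2)) else transpose (Inr 2) (Inr 3))" for i
  define T :: "nat \<Rightarrow> ('a + nat) set" where
    "T i = (if i = j1 then {Inr (P + 1), Inr (P + 2)} else {Inr 2, Inr 3})" for i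
  define fx where "fx i = (if evenperm (\<rho> i \<circ> \<chi> i) then id else tr i)" for i
  define \<pi> where "\<pi> i = \<rho> i \<circ> \<chi> i \<circ> fx i" for i
  define VY :: "('a + nat) set" where "VY = Inl ` VZ \<union> Inr ` {0..<2 * P - 1}"
  define EY where "EY = edges_of r VY \<pi>"
  have P0: "P > 0" using P5 by simp
  have \<chi>perm: "\<And>i. \<chi> i permutes C i"
    unfolding \<chi>_def C_def cycA_def cycB_def CA_def CB_def
    using sh_permutes[OF P0, of "P - 1" 1] sh_permutes[OF P0, of 0 1] permutes_id by auto
  have trperm: "\<And>i. tr i permutes T i"
    unfolding tr_def T_def by (auto intro: permutes_swap_id)
  have fxperm: "\<And>i. fx i permutes T i"
    unfolding fx_def using trperm permutes_id by auto
  have disj: "\<And>i. K i \<inter> C i = {}" "\<And>i. K i \<inter> T i = {}" "\<And>i. C i \<inter> T i = {}"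
    unfolding K_def C_def T_def CA_def CB_def using P5 j1 by auto
  have subs: "\<And>i. K i \<subseteq> VY" "\<And>i. C i \<subseteq> VY" "\<And>i. T i \<subseteq> VY"
    unfolding K_def C_def T_def CA_def CB_def VY_def using P5 by auto
  have \<pi>perm: "\<And>i. i < r \<Longrightarrow> \<pi> i permutes VY"
    unfolding \<pi>_def using permutes_subset[OF \<rho>K subs(1)] permutes_subset[OF \<chi>perm subs(2)]
      permutes_subset[OF fxperm subs(3)] permutes_compose by metis
  have finVY: "finite VY" unfolding VY_def using assms(2) by simp
  have \<pi>even: "\<And>i. i < r \<Longrightarrow> evenperm (\<pi> i)"
  proof -
    fix i assume i: "i < r"
    have pc: "permutation (\<rho> i \<circ> \<chi> i)"
      using permutes_subset[OF \<rho>K[OF i] subs(1)] permutes_subset[OF \<chi>perm subs(2)]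
        permutes_compose finVY permutation_permutes by metis
    have trd: "\<not> evenperm (tr i)" unfolding tr_def by (simp add: evenperm_swap)
    show "evenperm (\<pi> i)"
    proof (cases "evenperm (\<rho> i \<circ> \<chi> i)")
      case True then show ?thesis unfolding \<pi>_def fx_def by simp
    next
      case False
      then have "\<pi> i = (\<rho> i \<circ> \<chi> i) \<circ> tr i" unfolding \<pi>_def fx_def by simp
      then show ?thesis using evenperm_comp[OF pc permutation_swap_id] False trd
        unfolding tr_def by (simp split: if_splits)
    qed
  qed
  note reg = comp3_regions[OF \<rho>K \<chi>perm fxperm disj]
  have \<pi>K: "\<And>i w. i < r \<Longrightarrow> w \<in> K i \<Longrightarrow> \<pi> i w = \<rho> i w" unfolding \<pi>_def using reg(1) by blast
  have \<pi>C: "\<And>i w. i < r \<Longrightarrow> w \<in> C i \<Longrightarrow> \<pi> i w = \<chi> i w" unfolding \<pi>_def using reg(2) by blast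
  have \<pi>out: "\<And>i w. i < r \<Longrightarrow> w \<notin> K i \<Longrightarrow> w \<notin> C i \<Longrightarrow> w \<notin> T i \<Longrightarrow> \<pi> i w = w"
    unfolding \<pi>_def using reg(4) by blast

  have \<pi>Inl: "\<And>i u. i < r \<Longrightarrow> u \<in> VZ \<Longrightarrow> \<pi> i (Inl u) = \<rho> i (Inl u)"
    using \<pi>K unfolding K_def by auto
  have \<pi>EZ: "\<And>u i v. (u, i, v) \<in> EZ \<Longrightarrow> \<pi> i (Inl u) = Inl v"
    using \<pi>Inl \<rho>E lab by metis
  have \<pi>A: "\<And>k. P - 1 \<le> k \<Longrightarrow> k < P - 1 + P \<Longrightarrow> \<pi> i0 (Inr k) = Inr (P - 1 + (k - (P - 1) + 1) mod P)"
  proof -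
    fix k assume k: "P - 1 \<le> k" "k < P - 1 + P"
    have "Inr k \<in> C i0" unfolding C_def CA_def using k by auto
    then show "\<pi> i0 (Inr k) = Inr (P - 1 + (k - (P - 1) + 1) mod P)"
      using \<pi>C[OF i0] k unfolding \<chi>_def cycA_def by (simp add: sh_in)
  qed
  have \<pi>B: "\<And>k. k < P \<Longrightarrow> \<pi> j1 (Inr k) = Inr ((k + 1) mod P)"
  proof -
    fix k assume k: "k < P"
    have "Inr k \<in> C j1" unfolding C_def CB_def using k j1 by auto
    then show "\<pi> j1 (Inr k) = Inr ((k + 1) mod P)"
      using \<pi>C[OF j1(1)] k j1 unfolding \<chi>_def cycB_def by (simp add: sh_in)
  qed
  have \<pi>0_0: "\<pi> i0 (Inr 0) = Inr 0"
    using \<pi>out[OF i0, of "Inr 0"] P5 j1 unfolding K_def C_def CA_def T_def by (auto simp: image_iff)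
  have \<pi>1_P: "\<pi> j1 (Inr P) = Inr P"
    using \<pi>out[OF j1(1), of "Inr P"] P5 j1 unfolding K_def C_def CB_def T_def by (auto simp: image_iff)
  have \<pi>o_fix: "\<And>i k. i < r \<Longrightarrow> i \<noteq> i0 \<Longrightarrow> i \<noteq> j1 \<Longrightarrow> k \<ge> 4 \<Longrightarrow> \<pi> i (Inr k) = Inr k"
  proof -
    fix i k assume a: "i < r" "i \<noteq> i0" "i \<noteq> j1" "(k::nat) \<ge> 4"
    show "\<pi> i (Inr k) = Inr k"
      by (rule \<pi>out[OF a(1)]) (use a in \<open>auto simp: K_def C_def T_def\<close>)
  qed
  have \<pi>0_c: "\<pi> i0 (Inr (P - 1)) = Inr P" using \<pi>A[of "P - 1"] P5 by simp
  have \<pi>1_c: "\<pi> j1 (Inr (P - 1)) = Inr 0" using \<pi>B[of "P - 1"] P5 by simp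
  let ?G = "monodromy_group r VY EY"
  have Ggrp: "grp ?G" unfolding EY_def using mg_grp[where r=r and V=VY and \<pi>=\<pi>, OF \<pi>perm] by blast
  have Gpi: "\<And>i. i < r \<Longrightarrow> \<pi> i \<in> ?G" unfolding EY_def using mg_pi[where r=r and V=VY and \<pi>=\<pi>, OF \<pi>perm] by blast
  have Gpi_inv: "\<And>i. i < r \<Longrightarrow> inv (\<pi> i) \<in> ?G" unfolding EY_def using mg_pi_inv[where r=r and V=VY and \<pi>=\<pi>, OF \<pi>perm] by blast
  have Gpow: "\<And>p n. p \<in> ?G \<Longrightarrow> p ^^ n \<in> ?G" unfolding EY_def using mg_pow[where r=r and V=VY and \<pi>=\<pi>, OF \<pi>perm] by blast
  have Gperm: "\<And>p. p \<in> ?G \<Longrightarrow> p permutes VY" unfolding EY_def using mg_perm[where r=r and V=VY and \<pi>=\<pi>, OF \<pi>perm] by blast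
  have Geven: "\<And>p. p \<in> ?G \<Longrightarrow> evenperm p" unfolding EY_def using mg_even[where r=r and V=VY and \<pi>=\<pi>, OF \<pi>perm finVY \<pi>even] by blast
  have trN: "\<forall>a b. (transpose a b :: 'a + nat \<Rightarrow> 'a + nat) ^^ N = id"
    using transpose_pow_even Neven by metis
  have fxN: "\<And>i. fx i ^^ N = id"
    unfolding fx_def tr_def using trN by simp
  have powA: "\<pi> i0 ^^ N = cycA"
  proof -
    have "\<pi> i0 ^^ N = \<rho> i0 ^^ N \<circ> \<chi> i0 ^^ N \<circ> fx i0 ^^ N"
      unfolding \<pi>_def by (rule pow_split[OF \<rho>K[OF i0] \<chi>perm fxperm disj])
    also have "\<chi> i0 ^^ N = sh (P - 1) P (1 * N)" unfolding \<chi>_def cycA_def by (simp add: sh_pow[OF P0])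
    also have "sh (P - 1) P (1 * N) = cycA" unfolding cycA_def using sh_mod[of "P - 1" P N, symmetric] NmodP by simp
    finally show ?thesis using \<rho>0N fxN by simp
  qed
  have powB: "\<pi> j1 ^^ N = cycB"
  proof -
    have "\<pi> j1 ^^ N = \<rho> j1 ^^ N \<circ> \<chi> j1 ^^ N \<circ> fx j1 ^^ N"
      unfolding \<pi>_def by (rule pow_split[OF \<rho>K[OF j1(1)] \<chi>perm fxperm disj])
    also have "\<chi> j1 ^^ N = sh 0 P (1 * N)" unfolding \<chi>_def cycB_def using j1 by (simp add: sh_pow[OF P0])
    also have "sh 0 P (1 * N) = cycB" unfolding cycB_def using sh_mod[of 0 P N, symmetric] NmodP by simp
    finally show ?thesis using \<rho>1N fxN by simp
  qed
  have GA: "cycA \<in> ?G" using Gpow[OF Gpi[OF i0]] powA by metis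
  have GB: "cycB \<in> ?G" using Gpow[OF Gpi[OF j1(1)]] powB by metis
  have bA: "bij cycA" using Gperm[OF GA] permutes_bij by blast
  have bB: "bij cycB" using Gperm[OF GB] permutes_bij by blast
  have movA: "{w. cycA w \<noteq> w} = CA" unfolding cycA_def CA_def by (rule sh_moved) (use P5 in simp)
  have movB: "{w. cycB w \<noteq> w} = CB" unfolding cycB_def CB_def by (rule sh_moved) (use P5 in simp)
  have CAB: "CA \<inter> CB = {Inr (P - 1)}" unfolding CA_def CB_def using P5 by auto
  have comm: "cycA \<circ> cycB \<circ> inv cycA \<circ> inv cycB = cyc3 (Inr (P - 1)) (cycA (Inr (P - 1))) (cycB (Inr (P - 1)))"
    by (rule commutator3[OF bA bB]) (simp add: movA movB CAB)
  have cA: "cycA (Inr (P - 1)) = Inr P" unfolding cycA_def using P5 by (simp add: sh_in)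
  have cB: "cycB (Inr (P - 1)) = Inr 0" unfolding cycB_def using P5 by (simp add: sh_in)
  have G3: "cyc3 (Inr (P - 1)) (Inr P) (Inr 0) \<in> ?G"
  proof -
    have "cycA \<circ> cycB \<circ> inv cycA \<circ> inv cycB \<in> ?G"
      using GA GB grp_comp[OF Ggrp] grp_inv[OF Ggrp] by metis
    then show ?thesis using comm cA cB by simp
  qed
  define R0 :: "('a + nat) set" where "R0 = {Inr (P - 1), Inr P, Inr 0}"
  have altR0: "altin ?G R0"
    unfolding altin_def
  proof (intro allI impI)
    fix g assume g: "g permutes R0 \<and> evenperm g"
    show "g \<in> ?G"
    proof (rule alt_sub[OF Ggrp _ _ _ _ _ conjunct1[OF g] conjunct2[OF g]])
      show "finite R0" unfolding R0_def by simp
      show "Inr (P - 1) \<noteq> (Inr P :: 'a + nat)" using P5 by simp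
      show "Inr (P - 1) \<in> R0" "Inr P \<in> R0" unfolding R0_def by auto
      fix x assume "x \<in> R0" "x \<noteq> Inr (P - 1)" "x \<noteq> Inr P"
      then have "x = Inr 0" unfolding R0_def by auto
      then show "cyc3 (Inr (P - 1)) (Inr P) x \<in> ?G" using G3 by simp
    qed
  qed

  have R0VY: "R0 \<subseteq> VY" unfolding R0_def VY_def using P5 by auto
  define Fam where "Fam = {R. R0 \<subseteq> R \<and> R \<subseteq> VY \<and> altin ?G R}"
  have finFam: "finite Fam" unfolding Fam_def using finVY by (auto intro: finite_subset[of _ "Pow VY"])
  have R0Fam: "R0 \<in> Fam" unfolding Fam_def using R0VY altR0 by simp
  define m where "m = Max (card ` Fam)"
  have "m \<in> card ` Fam" unfolding m_def using finFam R0Fam by (intro Max_in) auto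
  then obtain R where RF: "R \<in> Fam" and Rm: "card R = m" by auto
  have RR0: "R0 \<subseteq> R" and RVY: "R \<subseteq> VY" and altR: "altin ?G R" using RF unfolding Fam_def by auto
  have finR: "finite R" using RVY finVY finite_subset by blast
  have maxi: "\<And>y. y \<in> VY \<Longrightarrow> y \<notin> R \<Longrightarrow> \<not> altin ?G (insert y R)"
  proof
    fix y assume y: "y \<in> VY" "y \<notin> R" and a: "altin ?G (insert y R)"
    then have "insert y R \<in> Fam" using RF unfolding Fam_def by auto
    then have "card (insert y R) \<le> m" unfolding m_def using finFam by simp
    moreover have "card (insert y R) = card R + 1" using finR y by simp
    ultimately show False using Rm by simp
  qed
  have close2: "\<And>s u v x. s \<in> ?G \<Longrightarrow> u \<noteq> v \<Longrightarrow> u \<in> R \<Longrightarrow> v \<in> R \<Longrightarrow> s u \<in> R \<Longrightarrow> s v \<in> R \<Longrightarrow>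
      x \<in> R \<Longrightarrow> s x \<in> R"
  proof -
    fix s u v x assume a: "s \<in> ?G" "u \<noteq> v" "u \<in> R" "v \<in> R" "s u \<in> R" "s v \<in> R" "x \<in> R"
    show "s x \<in> R" by (rule closure_step[OF Ggrp finR altR maxi a(1) Gperm[OF a(1)] a(2-7) RVY])
  qed
  have closeI: "\<And>i x. i < r \<Longrightarrow> x \<in> R \<Longrightarrow> \<pi> i x \<in> R \<and> inv (\<pi> i) x \<in> R"
  proof -
    fix i x assume i: "i < r" and x: "x \<in> R"
    obtain u v where uv: "u \<noteq> v" "u \<in> R" "v \<in> R" "\<pi> i u \<in> R" "\<pi> i v \<in> R"
    proof (cases "i = i0")
      case True
      then show ?thesis using that[of "Inr (P - 1)" "Inr 0"] RR0 \<pi>0_c \<pi>0_0 P5 unfolding R0_def by auto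
    next
      case ni0: False
      show ?thesis
      proof (cases "i = j1")
        case True
        then show ?thesis using that[of "Inr (P - 1)" "Inr P"] RR0 \<pi>1_c \<pi>1_P P5 unfolding R0_def by auto
      next
        case False
        then show ?thesis using that[of "Inr (P - 1)" "Inr P"] RR0 \<pi>o_fix[OF i ni0 False] P5
          unfolding R0_def by auto
      qed
    qed
    have "\<pi> i x \<in> R" using close2[OF Gpi[OF i] uv x] .
    moreover have "inv (\<pi> i) x \<in> R"
    proof (rule close2[OF Gpi_inv[OF i] _ uv(4,5) _ _ x])
      show "\<pi> i u \<noteq> \<pi> i v" using uv(1) permutes_inj[OF \<pi>perm[OF i]] by (auto dest: injD)
      show "inv (\<pi> i) (\<pi> i u) \<in> R" "inv (\<pi> i) (\<pi> i v) \<in> R"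
        using uv permutes_inverses(2)[OF \<pi>perm[OF i]] by auto
    qed
    ultimately show "\<pi> i x \<in> R \<and> inv (\<pi> i) x \<in> R" by blast
  qed
  define c :: "'a + nat" where "c = Inr (P - 1)"
  have cR: "c \<in> R" using RR0 unfolding R0_def c_def by auto
  have reachR: "\<And>w. (c, w) \<in> (adj EY)\<^sup>* \<Longrightarrow> w \<in> R"
  proof -
    fix w assume "(c, w) \<in> (adj EY)\<^sup>*"
    then show "w \<in> R"
    proof (induction rule: rtrancl_induct)
      case base then show ?case by (rule cR)
    next
      case (step w w')
      have "(w, w') \<in> adj (edges_of r VY \<pi>)" using step.hyps(2) unfolding EY_def .
      then obtain i where "i < r" "w' = \<pi> i w \<or> w' = inv (\<pi> i) w"
        using eo_adj[where r=r and V=VY and \<pi>=\<pi>, OF \<pi>perm] by blast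
      then show ?case using closeI step.IH by blast
    qed
  qed
  define Rch where "Rch = {w. (c, w) \<in> (adj EY)\<^sup>*}"
  have fwd: "\<And>w i. w \<in> Rch \<Longrightarrow> w \<in> VY \<Longrightarrow> i < r \<Longrightarrow> \<pi> i w \<in> Rch"
  proof -
    fix w i assume a: "w \<in> Rch" "w \<in> VY" "i < r"
    have "(w, \<pi> i w) \<in> adj EY" unfolding EY_def
      by (rule eo_adj_intro(1)[where r=r and V=VY and \<pi>=\<pi>, OF \<pi>perm a(2) a(3)])
    then show "\<pi> i w \<in> Rch" using a(1) unfolding Rch_def by (blast intro: rtrancl_into_rtrancl)
  qed
  have bwd: "\<And>w i. \<pi> i w \<in> Rch \<Longrightarrow> w \<in> VY \<Longrightarrow> i < r \<Longrightarrow> w \<in> Rch"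
  proof -
    fix w i assume a: "\<pi> i w \<in> Rch" "w \<in> VY" "i < r"
    have "(\<pi> i w, w) \<in> adj EY" unfolding EY_def
      by (rule eo_adj_intro(2)[where r=r and V=VY and \<pi>=\<pi>, OF \<pi>perm a(2) a(3)])
    then show "w \<in> Rch" using a(1) unfolding Rch_def by (blast intro: rtrancl_into_rtrancl)
  qed
  have cRch: "c \<in> Rch" unfolding Rch_def by simp
  have RchB: "\<And>k. k < P \<Longrightarrow> Inr k \<in> Rch"
  proof -
    fix k show "k < P \<Longrightarrow> Inr k \<in> Rch"
    proof (induction k)
      case 0
      have "\<pi> j1 c \<in> Rch" using fwd[OF cRch _ j1(1)] unfolding c_def VY_def using P5 by auto
      then show ?case using \<pi>1_c unfolding c_def by simp
    next
      case (Suc k)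
      then have "Inr k \<in> Rch" by simp
      then have "\<pi> j1 (Inr k) \<in> Rch" using fwd[OF _ _ j1(1)] Suc.prems unfolding VY_def by auto
      then show ?case using \<pi>B[of k] Suc.prems by simp
    qed
  qed
  have RchA: "\<And>j. j < P \<Longrightarrow> Inr (P - 1 + j) \<in> Rch"
  proof -
    fix j show "j < P \<Longrightarrow> Inr (P - 1 + j) \<in> Rch"
    proof (induction j)
      case 0 then show ?case using cRch unfolding c_def by simp
    next
      case (Suc j)
      then have "Inr (P - 1 + j) \<in> Rch" by simp
      then have "\<pi> i0 (Inr (P - 1 + j)) \<in> Rch" using fwd[OF _ _ i0] Suc.prems unfolding VY_def by auto
      moreover have "\<pi> i0 (Inr (P - 1 + j)) = Inr (P - 1 + Suc j)"
        using \<pi>A[of "P - 1 + j"] Suc.prems by simp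
      ultimately show ?case by simp
    qed
  qed
  have Rchz0: "Inl z0 \<in> Rch"
  proof -
    have I1: "Inr 1 \<in> Rch" using RchB P5 by simp
    have "Inr 1 \<in> K i0" unfolding K_def by simp
    then have p1: "\<pi> i0 (Inr 1) = \<rho> i0 (Inr 1)" using \<pi>K[OF i0] by blast
    have z0VY: "Inl z0 \<in> VY" "Inr 1 \<in> VY" unfolding VY_def using z0 P5 by auto
    show ?thesis
    proof (cases "\<rho> i0 (Inl z0) = Inr 1")
      case True
      then have "\<pi> i0 (Inl z0) \<in> Rch" using \<pi>Inl[OF i0 z0] I1 by simp
      then show ?thesis using bwd z0VY i0 by blast
    next
      case False
      then have "\<rho> i0 (Inr 1) = Inl z0" using \<rho>L by blast
      then show ?thesis using fwd[OF I1 z0VY(2) i0] p1 by simp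
    qed
  qed
  have RchZ: "\<And>z. z \<in> VZ \<Longrightarrow> Inl z \<in> Rch"
  proof -
    fix z assume z: "z \<in> VZ"
    then have "(z0, z) \<in> (adj EZ)\<^sup>*" using assms(5) z0 unfolding connected_graph_def by blast
    then show "Inl z \<in> Rch"
    proof (induction rule: rtrancl_induct)
      case base then show ?case by (rule Rchz0)
    next
      case (step y y')
      then obtain i where "(y, i, y') \<in> EZ \<or> (y', i, y) \<in> EZ" unfolding adj_def by blast
      then show ?case
      proof
        assume e: "(y, i, y') \<in> EZ"
        then have "\<pi> i (Inl y) = Inl y'" by (rule \<pi>EZ)
        moreover have "Inl y \<in> VY" "i < r" using lab[OF e] unfolding VY_def by auto
        ultimately show ?thesis using fwd[OF step.IH] by metis
      next
        assume e: "(y', i, y) \<in> EZ"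
        then have "\<pi> i (Inl y') = Inl y" by (rule \<pi>EZ)
        moreover have "Inl y' \<in> VY" "i < r" using lab[OF e] unfolding VY_def by auto
        ultimately show ?thesis using bwd step.IH by metis
      qed
    qed
  qed
  have VYRch: "VY \<subseteq> Rch"
  proof
    fix w assume "w \<in> VY"
    then consider z where "z \<in> VZ" "w = Inl z" | k where "k < 2 * P - 1" "w = Inr k"
      unfolding VY_def by auto
    then show "w \<in> Rch"
    proof cases
      case 1 then show ?thesis using RchZ by simp
    next
      case (2 k)
      show ?thesis
      proof (cases "k < P")
        case True then show ?thesis using RchB 2 by simp
      next
        case False
        then have "k = P - 1 + (k - (P - 1))" "k - (P - 1) < P" using 2 by auto
        then show ?thesis using RchA[of "k - (P - 1)"] 2 by simp
      qed
    qed
  qed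
  have RVYeq: "R = VY" using RVY VYRch reachR unfolding Rch_def by blast
  have symadj: "\<And>x y. (x, y) \<in> adj EY \<Longrightarrow> (y, x) \<in> adj EY" unfolding adj_def by blast
  have conn: "connected_graph VY EY"
    unfolding connected_graph_def
  proof (intro ballI)
    fix u w assume u: "u \<in> VY" and w: "w \<in> VY"
    have cu: "(c, u) \<in> (adj EY)\<^sup>*" and cw: "(c, w) \<in> (adj EY)\<^sup>*" using u w VYRch unfolding Rch_def by auto
    have "(u, c) \<in> (adj EY)\<^sup>*" using cu
    proof (induction rule: rtrancl_induct)
      case base then show ?case by simp
    next
      case (step y z)
      show ?case by (rule converse_rtrancl_into_rtrancl[OF symadj[OF step.hyps(2)] step.IH])
    qed
    then show "(u, w) \<in> (adj EY)\<^sup>*" using cw by (rule rtrancl_trans)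
  qed
  have finEY: "finite EY"
  proof -
    have "EY \<subseteq> (\<lambda>(u, i). (u, i, \<pi> i u)) ` (VY \<times> {..<r})" unfolding EY_def edges_of_def by auto
    then show ?thesis by (rule finite_subset) (simp add: finVY)
  qed
  have cov: "covering r VY EY" unfolding EY_def by (rule eo_covering[where r=r and V=VY and \<pi>=\<pi>, OF \<pi>perm])
  have sub1: "Inl ` VZ \<subseteq> VY" unfolding VY_def by auto
  have sub2: "(\<lambda>(u, i, v). (Inl u, i, Inl v)) ` EZ \<subseteq> EY"
  proof
    fix e :: "('a + nat) \<times> nat \<times> ('a + nat)"
    assume "e \<in> (\<lambda>(u, i, v). (Inl u, i, Inl v)) ` EZ"
    then obtain u i v where e: "e = (Inl u, i, Inl v)" "(u, i, v) \<in> EZ" by auto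
    have "Inl u \<in> VY" "i < r" "\<pi> i (Inl u) = Inl v" using lab[OF e(2)] \<pi>EZ[OF e(2)] sub1 by auto
    then show "e \<in> EY" unfolding e(1) EY_def edges_of_def by force
  qed
  have mono: "?G = alt_group VY"
  proof
    show "?G \<subseteq> alt_group VY" unfolding alt_group_def using Gperm Geven by blast
    show "alt_group VY \<subseteq> ?G" using altR RVYeq unfolding alt_group_def altin_def by blast
  qed
  show ?thesis using finVY finEY conn cov sub1 sub2 mono by blast
qed

end
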